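(* Let $(D_n)_{n\in\mathbb Z}$ be the integer sequence with $D_0=1$, $D_1=D_2=0$ and $D_n+D_{n+1}=D_{n+3}$ for all $n\in\mathbb Z$ (so $D_{-1}=-1$). For integers $n,i,j$ let $$\Delta'_{n,n+i,n+i+j}=\det\begin{pmatrix}D_{n+2} & D_{n+4} & D_{n+3}\\ D_{n+i+2} & D_{n+i+4} & D_{n+i+3}\\ D_{n+i+j+2} & D_{n+i+j+4} & D_{n+i+j+3}\end{pmatrix}.$$ Then $\Delta'_{n,n+i,n+i+j}$ does not depend on $n$, and for all $n,i,j\in\mathbb Z$, $$\Delta'_{n,n+i,n+i+j}=D_{i+2}D_{i+j+4}-D_{i+j+2}D_{i+4}.$$ *)

theory Defs
  imports "HOL-Analysis.Analysis"
begin

fun Dpos :: "nat \<Rightarrow> int" where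
  "Dpos 0 = 1"
| "Dpos (Suc 0) = 0"
| "Dpos (Suc (Suc 0)) = 0"
| "Dpos (Suc (Suc (Suc n))) = Dpos n + Dpos (Suc n)"

text \<open>Dneg k = D(2 - k), obtained by running the recurrence backwards:
  D(m) = D(m+3) - D(m+1).\<close>
fun Dneg :: "nat \<Rightarrow> int" where
  "Dneg 0 = 0"
| "Dneg (Suc 0) = 0"
| "Dneg (Suc (Suc 0)) = 1"
| "Dneg (Suc (Suc (Suc k))) = Dneg k - Dneg (Suc (Suc k))"

definition D :: "int \<Rightarrow> int" where
  "D n = (if 0 \<le> n then Dpos (nat n) else Dneg (nat (2 - n)))"

definition Delta' :: "int \<Rightarrow> int \<Rightarrow> int \<Rightarrow> int" where
  "Delta' a b c = det (vector [vector [D (a+2), D (a+4), D (a+3)],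
                               vector [D (b+2), D (b+4), D (b+3)],
                               vector [D (c+2), D (c+4), D (c+3)]] :: int^3^3)"

end

theory Submission
  imports Defs
begin

lemma Dneg_rec: "k \<ge> 3 \<Longrightarrow> Dneg k = Dneg (k-3) - Dneg (k-1)"
proof -
  assume "k \<ge> 3"
  then obtain m where "k = Suc (Suc (Suc m))" by (rule_tac m="k-3" in that) simp
  then show ?thesis by simp
qed

lemma Drec: "D (n+3) = D n + D (n+1)"
proof (cases "n \<ge> 0")
  case True
  then obtain k where k: "n = int k" by (metis nonneg_eq_int)
  have "nat (int k + 3) = Suc (Suc (Suc k))" by simp
  moreover have "nat (int k + 1) = Suc k" by simp
  ultimately show ?thesis using k by (simp add: D_def)
next
  case False
  consider "n = -1" | "n = -2" | "n = -3" | "n \<le> -4" using False by linarith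
  then show ?thesis
  proof cases
    case 1 then show ?thesis by (simp add: D_def numeral_eq_Suc)
  next
    case 2 then show ?thesis by (simp add: D_def numeral_eq_Suc)
  next
    case 3 then show ?thesis by (simp add: D_def numeral_eq_Suc)
  next
    case 4
    define k where "k = nat (2 - n)"
    have k6: "k \<ge> 6" using 4 by (simp add: k_def)
    have a: "nat (2 - (n+3)) = k - 3" using 4 by (simp add: k_def)
    have b: "nat (2 - (n+1)) = k - 1" using 4 by (simp add: k_def)
    have "D (n+3) = Dneg (k-3)" using 4 a by (simp add: D_def)
    moreover have "D n = Dneg k" using 4 by (simp add: D_def k_def)
    moreover have "D (n+1) = Dneg (k-1)" using 4 b by (simp add: D_def)
    ultimately show ?thesis using Dneg_rec[of k] k6 by simp
  qed
qed

lemma Delta'_expand: "Delta' a b c =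
    D(a+2) * D(b+4) * D(c+3) + D(a+4) * D(b+3) * D(c+2) + D(a+3) * D(b+2) * D(c+4)
  - D(a+2) * D(b+3) * D(c+4) - D(a+4) * D(b+2) * D(c+3) - D(a+3) * D(b+4) * D(c+2)"
  unfolding Delta'_def det_3 by simp

lemma D5: "D (a+1+4) = D (a+2) + D (a+3)"
  using Drec[of "a+2"] by (simp add: add.assoc)

lemma Delta'_shift1: "Delta' (a+1) (b+1) (c+1) = Delta' a b c"
proof -
  have e: "\<And>x. D (x+1+2) = D (x+3)" "\<And>x. D (x+1+3) = D (x+4)"
    by (simp_all add: add.assoc)
  show ?thesis unfolding Delta'_expand e D5 by (simp add: algebra_simps)
qed

lemma Delta'_shift: "Delta' (a+k) (b+k) (c+k) = Delta' a b c"
proof (induction k rule: int_induct[where k=0])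
  case base then show ?case by simp
next
  case (step1 i)
  then show ?case using Delta'_shift1[of "a+i" "b+i" "c+i"] by (simp add: add.assoc)
next
  case (step2 i)
  then show ?case using Delta'_shift1[of "a+(i-1)" "b+(i-1)" "c+(i-1)"] by (simp add: algebra_simps)
qed

theorem theorem18:
  shows "(\<forall>n m i j :: int. Delta' n (n+i) (n+i+j) = Delta' m (m+i) (m+i+j))
       \<and> (\<forall>n i j :: int. Delta' n (n+i) (n+i+j)
              = D (i+2) * D (i+j+4) - D (i+j+2) * D (i+4))"
proof -
  have z: "Delta' n (n+i) (n+i+j) = Delta' 0 i (i+j)" for n i j :: int
    using Delta'_shift[of 0 n i "i+j"] by (simp add: algebra_simps)
  have v: "D 2 = 0" "D 4 = 0" "D 3 = 1" by (simp_all add: D_def numeral_eq_Suc)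
  have "Delta' 0 i (i+j) = D (i+2) * D (i+j+4) - D (i+j+2) * D (i+4)" for i j :: int
    unfolding Delta'_expand using v by (simp add: algebra_simps)
  then show ?thesis using z by simp
qed

end
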